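(* Let $\nu,\beta>0$, $\rho>1$, let $X_1,X_2,\ldots$ be i.i.d. $\mathrm{Pareto}(\nu,\beta)$ and $M_n\coloneqq\frac{\log X_{(n)}-\log X_{(1)}}{\log\rho}+1$, with $X_{(1)},X_{(n)}$ the minimum and maximum of $X_1,\ldots,X_n$. Then \[(M_n-1)(\beta\log\rho)-\log n\implies\mathrm{Gumbel}(0,1)\quad\text{as }n\to\infty,\] which implies that, for $n$ large, \[M_n\stackrel{\cdot}{\sim}\mathrm{Gumbel}\!\left(1+\frac{\log n}{\beta\log\rho},\frac{1}{\beta\log\rho}\right),\] so that $\mathbb{E}M_n\sim\frac{\log n}{\beta\log\rho}$, $\mathrm{Var}(M_n)\sim\frac{\pi^2}{6\beta^2\log^2\rho}$, and $\mathrm{Skew}(M_n)\sim\frac{12\sqrt6\,\zeta(3)}{\pi^3}$.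
   Context: $\mathrm{Pareto}(\nu,\beta)$ has CDF $1-(\nu/x)^\beta$ for $x>\nu$. $\mathrm{Gumbel}(\mu,\sigma)$ has CDF $\exp(-\exp(-(x-\mu)/\sigma))$. $\implies$ is convergence in distribution; $\stackrel{\cdot}{\sim}$ means approximate distribution; $\sim$ means ratio tends to $1$. $\zeta(3)=\sum_{k\ge1}k^{-3}$; $\mathrm{Skew}$ is the standardized third moment. *)

theory Defs
  imports "HOL-Probability.Probability" "HOL-Library.Landau_Symbols"
begin

definition pareto_cdf :: "real \<Rightarrow> real \<Rightarrow> real \<Rightarrow> real" where
  "pareto_cdf \<nu> \<beta> x = (if x > \<nu> then 1 - (\<nu> / x) powr \<beta> else 0)"

definition gumbel_cdf :: "real \<Rightarrow> real \<Rightarrow> real \<Rightarrow> real" where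
  "gumbel_cdf \<mu> \<sigma> x = exp (- exp (- (x - \<mu>) / \<sigma>))"

definition sample_max :: "(nat \<Rightarrow> 'a \<Rightarrow> real) \<Rightarrow> nat \<Rightarrow> 'a \<Rightarrow> real" where
  "sample_max X n \<omega> = Max ((\<lambda>i. X i \<omega>) ` {1..n})"

definition sample_min :: "(nat \<Rightarrow> 'a \<Rightarrow> real) \<Rightarrow> nat \<Rightarrow> 'a \<Rightarrow> real" where
  "sample_min X n \<omega> = Min ((\<lambda>i. X i \<omega>) ` {1..n})"

definition mean :: "'a measure \<Rightarrow> ('a \<Rightarrow> real) \<Rightarrow> real" where
  "mean M Y = (\<integral>\<omega>. Y \<omega> \<partial>M)"

definition var :: "'a measure \<Rightarrow> ('a \<Rightarrow> real) \<Rightarrow> real" where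
  "var M Y = (\<integral>\<omega>. (Y \<omega> - mean M Y)^2 \<partial>M)"

definition skew :: "'a measure \<Rightarrow> ('a \<Rightarrow> real) \<Rightarrow> real" where
  "skew M Y = (\<integral>\<omega>. (Y \<omega> - mean M Y)^3 \<partial>M) / (var M Y) powr (3/2)"

definition zeta3 :: real where
  "zeta3 = (\<Sum>k. 1 / (real (Suc k))^3)"

end

theory Submission
  imports Defs
begin



definition SS :: "nat \<Rightarrow> nat \<Rightarrow> real" where
  "SS k m = (\<Sum>j<m. real (m choose (j+1)) * (-1)^j / real (j+1) ^ k)"

definition HH :: "nat \<Rightarrow> nat \<Rightarrow> real" where
  "HH k m = (\<Sum>j<m. 1 / real (j+1) ^ k)"

lemma SS0: assumes "m > 0" shows "SS 0 m = 1"
proof -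
  have "(\<Sum>i\<le>m. (-1)^i * real (m choose i)) = 0" using choose_alternating_sum[OF assms] by simp
  also have "(\<Sum>i\<le>m. (-1)^i * real (m choose i)) = 1 + (\<Sum>j<m. (-1)^(j+1) * real (m choose (j+1)))"
    by (simp add: sum.atMost_shift lessThan_Suc_atMost)
  finally show ?thesis unfolding SS_def by (simp add: sum_negf mult.commute)
qed

lemma SS_rec: "SS (Suc k) (Suc m) = SS (Suc k) m + SS k (Suc m) / real (Suc m)"
proof -
  have e1: "(\<Sum>j<Suc m. real (m choose (j+1)) * (-1)^j / real (j+1) ^ Suc k) = SS (Suc k) m"
    unfolding SS_def by simp
  have e2: "real (m choose j) = real (Suc m choose (j+1)) * real (j+1) / real (Suc m)" for j
  proof -
    have "real (Suc m * (m choose j)) = real ((Suc m choose Suc j) * Suc j)"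
      using Suc_times_binomial_eq[of m j] by presburger
    then show ?thesis by (simp add: field_simps)
  qed
  have "(\<Sum>j<Suc m. real (m choose j) * (-1)^j / real (j+1) ^ Suc k)
        = (\<Sum>j<Suc m. real (Suc m choose (j+1)) * (-1)^j / real (j+1) ^ k) / real (Suc m)"
    unfolding sum_divide_distrib
    by (intro sum.cong refl, subst e2) (simp add: field_simps del: of_nat_Suc)
  then have e3: "(\<Sum>j<Suc m. real (m choose j) * (-1)^j / real (j+1) ^ Suc k) = SS k (Suc m) / real (Suc m)"
    unfolding SS_def by simp
  have "SS (Suc k) (Suc m) = (\<Sum>j<Suc m. (real (m choose (j+1)) + real (m choose j)) * (-1)^j / real (j+1) ^ Suc k)"
    unfolding SS_def by (intro sum.cong) auto
  also have "\<dots> = (\<Sum>j<Suc m. real (m choose (j+1)) * (-1)^j / real (j+1) ^ Suc k)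
     + (\<Sum>j<Suc m. real (m choose j) * (-1)^j / real (j+1) ^ Suc k)"
    by (simp add: sum.distrib[symmetric] add_divide_distrib distrib_right)
  finally show ?thesis using e1 e3 by simp
qed

lemma HH_Suc: "HH k (Suc m) = HH k m + 1 / real (Suc m) ^ k"
  unfolding HH_def by simp

lemma SS1: "SS 1 m = HH 1 m"
proof (induction m)
  case 0 then show ?case by (simp add: SS_def HH_def)
next
  case (Suc m) then show ?case using SS_rec[of 0 m] SS0[of "Suc m"] HH_Suc[of 1 m] by simp
qed

lemma SS2: "2 * SS 2 m = HH 1 m ^ 2 + HH 2 m"
proof (induction m)
  case 0 then show ?case by (simp add: SS_def HH_def)
next
  case (Suc m)
  define h where "h = 1 / real (Suc m)"
  have "SS 2 (Suc m) = SS 2 m + HH 1 (Suc m) * h"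
    using SS_rec[of 1 m] SS1[of "Suc m"] by (simp add: numeral_2_eq_2 h_def)
  moreover have "HH 1 (Suc m) = HH 1 m + h" "HH 2 (Suc m) = HH 2 m + h^2"
    using HH_Suc[of 1 m] HH_Suc[of 2 m] by (simp_all add: h_def power_one_over)
  ultimately show ?case using Suc by (simp add: algebra_simps power2_eq_square)
qed

lemma SS3: "6 * SS 3 m = HH 1 m ^ 3 + 3 * HH 1 m * HH 2 m + 2 * HH 3 m"
proof (induction m)
  case 0 then show ?case by (simp add: SS_def HH_def)
next
  case (Suc m)
  define h where "h = 1 / real (Suc m)"
  have "SS 3 (Suc m) = SS 3 m + SS 2 (Suc m) * h"
    using SS_rec[of 2 m] by (simp add: numeral_3_eq_3 numeral_2_eq_2 h_def)
  moreover have "SS 2 (Suc m) = (HH 1 (Suc m) ^ 2 + HH 2 (Suc m)) / 2" using SS2[of "Suc m"] by simp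
  moreover have "HH 1 (Suc m) = HH 1 m + h" "HH 2 (Suc m) = HH 2 m + h^2" "HH 3 (Suc m) = HH 3 m + h^3"
    using HH_Suc[of 1 m] HH_Suc[of 2 m] HH_Suc[of 3 m] by (simp_all add: h_def power_one_over)
  ultimately show ?case using Suc by (simp add: algebra_simps power2_eq_square power3_eq_cube)
qed




definition fdens :: "nat \<Rightarrow> real \<Rightarrow> real" where
  "fdens m t = (if t < 0 then 0 else real m * exp (-t) * (1 - exp (-t)) ^ (m - 1))"

lemma fdens_nonneg: "0 \<le> fdens m t"
  unfolding fdens_def by auto

lemma fdens_measurable[measurable]: "fdens m \<in> borel_measurable borel"
  unfolding fdens_def[abs_def] by measurable

lemma fdens_e2: "exp (-t) * (- exp (-t)) ^ j = (-1)^j * exp (- (real (j+1) * t))"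
proof -
  have "exp (- (real (j+1) * t)) = exp (-t + real j * (-t))" by (simp add: algebra_simps)
  also have "\<dots> = exp (-t) * exp (real j * (-t))" by (rule exp_add)
  also have "exp (real j * (-t)) = exp (-t) ^ j" by (rule exp_of_nat_mult)
  finally have 1: "exp (- (real (j+1) * t)) = exp (-t) * exp (-t) ^ j" .
  have 2: "(- exp (-t)) ^ j = (-1)^j * exp (-t) ^ j" by (rule power_minus)
  show ?thesis unfolding 1 2 by (simp only: mult.left_commute)
qed

lemma fdens_e3: assumes "\<not> t < 0"
  shows "real m * real ((m-1) choose j) * ((-1)^j * exp (- (real (j+1) * t))) =
         real m * real ((m-1) choose j) * (-1)^j / real (j+1) * erlang_density 0 (real (j+1)) t"
proof -
  have "erlang_density 0 (real (j+1)) t = real (j+1) * exp (- (real (j+1) * t))"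
    using assms unfolding erlang_density_def by (simp add: algebra_simps)
  then show ?thesis by simp
qed

lemma fdens_expand:
  assumes m: "m > 0"
  shows "fdens m t = (\<Sum>j<m. real m * real ((m-1) choose j) * (-1)^j / real (j+1)
                          * erlang_density 0 (real (j+1)) t)"
proof (cases "t < 0")
  case True then show ?thesis by (simp add: fdens_def erlang_density_def)
next
  case False
  have "(1 - exp (-t)) ^ (m - 1) = (\<Sum>j\<le>m-1. real ((m-1) choose j) * (- exp (-t)) ^ j)"
    using binomial_ring[of "- exp (-t)" 1 "m-1"] by (simp only: power_one mult_1_right diff_conv_add_uminus add.commute)
  also have "\<dots> = (\<Sum>j<m. real ((m-1) choose j) * (- exp (-t)) ^ j)"
    by (rule sum.cong) (use m in auto)
  finally have e: "(1 - exp (-t)) ^ (m - 1) = (\<Sum>j<m. real ((m-1) choose j) * (- exp (-t)) ^ j)" .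
  have e3: "real m * exp (-t) * (real ((m-1) choose j) * (- exp (-t)) ^ j) =
     real m * real ((m-1) choose j) * (-1)^j / real (j+1) * erlang_density 0 (real (j+1)) t" for j
  proof -
    have "real m * exp (-t) * (real ((m-1) choose j) * (- exp (-t)) ^ j)
       = real m * real ((m-1) choose j) * (exp (-t) * (- exp (-t)) ^ j)" by (simp only: mult.assoc mult.left_commute)
    also have "\<dots> = real m * real ((m-1) choose j) * ((-1)^j * exp (- (real (j+1) * t)))"
      by (simp only: fdens_e2)
    also have "\<dots> = real m * real ((m-1) choose j) * (-1)^j / real (j+1) * erlang_density 0 (real (j+1)) t"
      by (rule fdens_e3[OF False])
    finally show ?thesis .
  qed
  have "fdens m t = real m * exp (-t) * (1 - exp (-t)) ^ (m - 1)"
    using False by (simp add: fdens_def)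
  then show ?thesis unfolding e sum_distrib_left e3 .
qed

lemma erlang0_moment:
  assumes l: "l > 0"
  shows "has_bochner_integral lborel (\<lambda>t. erlang_density 0 l t * t ^ k) (fact k / l ^ k)"
proof (rule has_bochner_integral_nn_integral)
  show "(\<lambda>t. erlang_density 0 l t * t ^ k) \<in> borel_measurable lborel" by measurable
  show "AE x in lborel. 0 \<le> erlang_density 0 l x * x ^ k"
    using l by (auto simp: erlang_density_def)
  show "0 \<le> fact k / l ^ k" using l by simp
  show "(\<integral>\<^sup>+ x. ennreal (erlang_density 0 l x * x ^ k) \<partial>lborel) = ennreal (fact k / l ^ k)"
    using nn_integral_erlang_ith_moment[OF l, of 0 k] by simp
qed

lemma fdens_moment:
  assumes m: "m > 0"
  shows "has_bochner_integral lborel (\<lambda>t. fdens m t * t ^ k) (fact k * SS k m)"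
proof -
  have "has_bochner_integral lborel
     (\<lambda>t. \<Sum>j<m. (real m * real ((m-1) choose j) * (-1)^j / real (j+1)) * (erlang_density 0 (real (j+1)) t * t ^ k))
     (\<Sum>j<m. (real m * real ((m-1) choose j) * (-1)^j / real (j+1)) * (fact k / real (j+1) ^ k))"
    by (rule has_bochner_integral_sum, rule has_bochner_integral_mult_right, rule erlang0_moment) simp
  moreover have "(\<lambda>t. \<Sum>j<m. (real m * real ((m-1) choose j) * (-1)^j / real (j+1)) * (erlang_density 0 (real (j+1)) t * t ^ k))
      = (\<lambda>t. fdens m t * t ^ k)"
    using m by (auto simp: fdens_expand sum_distrib_right mult.assoc)
  moreover have "(\<Sum>j<m. (real m * real ((m-1) choose j) * (-1)^j / real (j+1)) * (fact k / real (j+1) ^ k))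
      = fact k * SS k m"
  proof -
    have c: "real m * real ((m-1) choose j) = real (m choose (j+1)) * real (j+1)" for j
    proof -
      have "m * ((m-1) choose j) = (m choose (j+1)) * (j+1)"
        using Suc_times_binomial_eq[of "m-1" j] m by simp
      then show ?thesis by (metis of_nat_mult)
    qed
    show ?thesis unfolding SS_def sum_distrib_left
      by (intro sum.cong refl, subst c) (simp add: field_simps del: of_nat_Suc)
  qed
  ultimately show ?thesis by simp
qed

definition mu :: "nat \<Rightarrow> real measure" where
  "mu m = density lborel (fdens m)"

lemma nn_fdens_total:
  assumes m: "m > 0"
  shows "(\<integral>\<^sup>+ t. ennreal (fdens m t) \<partial>lborel) = 1"
proof -
  have h: "has_bochner_integral lborel (\<lambda>t. fdens m t) 1"
    using fdens_moment[OF m, of 0] SS0[OF m] by simp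
  have "(\<integral>\<^sup>+ t. ennreal (fdens m t) \<partial>lborel) = ennreal (integral\<^sup>L lborel (fdens m))"
    using h by (intro nn_integral_eq_integral) (auto simp: has_bochner_integral_iff fdens_nonneg)
  then show ?thesis using h by (simp add: has_bochner_integral_iff)
qed

lemma prob_space_mu: "m > 0 \<Longrightarrow> prob_space (mu m)"
  unfolding mu_def
  by (intro prob_spaceI) (auto simp: emeasure_density nn_fdens_total)

lemma real_distribution_mu: "m > 0 \<Longrightarrow> real_distribution (mu m)"
  unfolding real_distribution_def real_distribution_axioms_def
  using prob_space_mu by (simp add: mu_def)

lemma cdf_mu:
  assumes m: "m > 0"
  shows "cdf (mu m) x = (if x < 0 then 0 else (1 - exp (-x)) ^ m)"
proof -
  have em: "emeasure (mu m) {..x} = (\<integral>\<^sup>+ t. ennreal (fdens m t) * indicator {..x} t \<partial>lborel)"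
    unfolding mu_def by (subst emeasure_density) (auto simp: mult.commute)
  show ?thesis
  proof (cases "x < 0")
    case True
    have "(\<integral>\<^sup>+ t. ennreal (fdens m t) * indicator {..x} t \<partial>lborel) = (\<integral>\<^sup>+ t. 0 \<partial>(lborel::real measure))"
      by (intro nn_integral_cong) (use True in \<open>auto simp: fdens_def indicator_def\<close>)
    then show ?thesis using True em by (simp add: cdf_def measure_def)
  next
    case False
    let ?F = "\<lambda>t. (1 - exp (-t)) ^ m"
    have "((\<lambda>t. real m * exp (-t) * (1 - exp (-t)) ^ (m - 1)) has_integral (?F x - ?F 0)) {0..x}"
    proof (rule fundamental_theorem_of_calculus)
      show "0 \<le> x" using False by simp
      fix t assume "t \<in> {0..x}"
      have "(?F has_real_derivative (real m * exp (-t) * (1 - exp (-t)) ^ (m - 1))) (at t within {0..x})"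
        by (auto intro!: derivative_eq_intros simp: algebra_simps)
      then show "(?F has_vector_derivative real m * exp (-t) * (1 - exp (-t)) ^ (m - 1)) (at t within {0..x})"
        by (simp add: has_real_derivative_iff_has_vector_derivative[symmetric])
    qed
    then have h1: "((\<lambda>t. real m * exp (-t) * (1 - exp (-t)) ^ (m - 1)) has_integral (?F x)) {0..x}"
      using m by (simp add: power_0_left)
    have "(fdens m has_integral (?F x)) {0..x}"
      by (rule iffD2[OF has_integral_cong h1]) (simp add: fdens_def)
    then have "(\<integral>\<^sup>+ t. ennreal (fdens m t) * indicator {0..x} t \<partial>lborel) = ennreal (?F x)"
      by (intro nn_integral_has_integral_lebesgue') (auto simp: fdens_nonneg)
    moreover have "(\<integral>\<^sup>+ t. ennreal (fdens m t) * indicator {..x} t \<partial>lborel)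
        = (\<integral>\<^sup>+ t. ennreal (fdens m t) * indicator {0..x} t \<partial>lborel)"
      by (intro nn_integral_cong) (auto simp: fdens_def split: split_indicator)
    ultimately show ?thesis using False em
      by (simp add: cdf_def measure_def)
  qed
qed

lemma mu_moment:
  assumes m: "m > 0"
  shows "integrable (mu m) (\<lambda>t. t ^ k)" "integral\<^sup>L (mu m) (\<lambda>t. t ^ k) = fact k * SS k m"
proof -
  have h: "has_bochner_integral lborel (\<lambda>t. fdens m t *\<^sub>R t ^ k) (fact k * SS k m)"
    using fdens_moment[OF m, of k] by simp
  have "has_bochner_integral (mu m) (\<lambda>t. t ^ k) (fact k * SS k m)"
    unfolding mu_def by (rule has_bochner_integral_density[OF _ _ _ h]) (auto simp: fdens_nonneg)
  then show "integrable (mu m) (\<lambda>t. t ^ k)" "integral\<^sup>L (mu m) (\<lambda>t. t ^ k) = fact k * SS k m"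
    by (auto simp: has_bochner_integral_iff)
qed




definition U01 :: "real measure" where "U01 = uniform_measure lborel {0<..1}"

definition parmap :: "real \<Rightarrow> real \<Rightarrow> real \<Rightarrow> real" where
  "parmap \<nu> \<beta> u = \<nu> / u powr (1/\<beta>)"

definition Par :: "real \<Rightarrow> real \<Rightarrow> real measure" where
  "Par \<nu> \<beta> = distr U01 borel (parmap \<nu> \<beta>)"

lemma parmap_measurable[measurable]: "parmap \<nu> \<beta> \<in> borel_measurable borel"
  unfolding parmap_def[abs_def] by measurable

lemma parmap_measurable_U01[measurable]: "parmap \<nu> \<beta> \<in> borel_measurable U01"
  by (subst measurable_cong_sets[where M'=borel and N'=borel]) (auto simp: U01_def)

lemma prob_space_U01: "prob_space U01"
  unfolding U01_def by (rule prob_space_uniform_measure) auto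

lemma space_U01[simp]: "space U01 = UNIV" and sets_U01[simp]: "sets U01 = sets borel"
  by (auto simp: U01_def)

lemma emeasure_U01: "A \<in> sets borel \<Longrightarrow> emeasure U01 A = emeasure lborel ({0<..1} \<inter> A)"
  unfolding U01_def by (subst emeasure_uniform_measure) (auto simp: divide_ennreal_def)

lemma measure_U01: "A \<in> sets borel \<Longrightarrow> measure U01 A = measure lborel ({0<..1} \<inter> A)"
  unfolding measure_def by (simp add: emeasure_U01)

lemma nn_integral_U01:
  assumes [measurable]: "f \<in> borel_measurable borel"
  shows "(\<integral>\<^sup>+ u. f u \<partial>U01) = (\<integral>\<^sup>+ u. f u * indicator {0<..1} u \<partial>lborel)"
  unfolding U01_def by (subst nn_integral_uniform_measure) (auto simp: divide_ennreal_def)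

lemma real_distribution_Par: "real_distribution (Par \<nu> \<beta>)"
  unfolding real_distribution_def real_distribution_axioms_def Par_def
  by (auto intro!: prob_space.prob_space_distr prob_space_U01)

lemma parmap_le_iff:
  assumes "\<nu> > 0" "\<beta> > 0" "u > 0" "x > 0"
  shows "parmap \<nu> \<beta> u \<le> x \<longleftrightarrow> (\<nu> / x) powr \<beta> \<le> u"
proof -
  have up: "u powr (1/\<beta>) > 0" using assms by simp
  have "parmap \<nu> \<beta> u \<le> x \<longleftrightarrow> \<nu> / x \<le> u powr (1/\<beta>)"
    unfolding parmap_def using assms up by (simp add: divide_le_eq pos_divide_le_eq mult.commute)
  also have "\<dots> \<longleftrightarrow> (\<nu> / x) powr \<beta> \<le> u"
  proof
    assume "\<nu> / x \<le> u powr (1/\<beta>)"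
    then have "(\<nu> / x) powr \<beta> \<le> (u powr (1/\<beta>)) powr \<beta>"
      using assms by (intro powr_mono2) auto
    also have "\<dots> = u" using assms by (simp add: powr_powr)
    finally show "(\<nu> / x) powr \<beta> \<le> u" .
  next
    assume "(\<nu> / x) powr \<beta> \<le> u"
    then have "((\<nu> / x) powr \<beta>) powr (1/\<beta>) \<le> u powr (1/\<beta>)"
      using assms by (intro powr_mono2) auto
    also have "((\<nu> / x) powr \<beta>) powr (1/\<beta>) = \<nu> / x" using assms by (simp add: powr_powr)
    finally show "\<nu> / x \<le> u powr (1/\<beta>)" .
  qed
  finally show ?thesis .
qed

lemma parmap_ge:
  assumes "\<nu> > 0" "\<beta> > 0" "0 < u" "u \<le> 1"
  shows "\<nu> \<le> parmap \<nu> \<beta> u"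
proof -
  have "u powr (1/\<beta>) \<le> 1 powr (1/\<beta>)" using assms by (intro powr_mono2) auto
  then have "u powr (1/\<beta>) \<le> 1" by simp
  moreover have "u powr (1/\<beta>) > 0" using assms by simp
  ultimately show ?thesis unfolding parmap_def using assms by (simp add: le_divide_eq)
qed

lemma parmap_pow:
  assumes "\<nu> > 0" "\<beta> > 0" "0 < u"
  shows "(\<nu> / parmap \<nu> \<beta> u) powr \<beta> = u"
  using assms by (simp add: parmap_def powr_powr)

lemma cdf_Par:
  assumes nu: "\<nu> > 0" and be: "\<beta> > 0"
  shows "cdf (Par \<nu> \<beta>) = pareto_cdf \<nu> \<beta>"
proof
  fix x
  have "cdf (Par \<nu> \<beta>) x = measure U01 (parmap \<nu> \<beta> -` {..x})"
    unfolding cdf_def Par_def by (subst measure_distr) auto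
  also have "\<dots> = measure lborel ({0<..1} \<inter> {u. parmap \<nu> \<beta> u \<le> x})"
    by (subst measure_U01) (auto simp: vimage_def)
  also have "\<dots> = pareto_cdf \<nu> \<beta> x"
  proof (cases "x > \<nu>")
    case True
    have x0: "x > 0" using True nu by simp
    have a0: "(\<nu> / x) powr \<beta> > 0" using nu x0 by simp
    have a1: "(\<nu> / x) powr \<beta> \<le> 1"
    proof -
      have "(\<nu> / x) powr \<beta> \<le> 1 powr \<beta>" using nu x0 True be by (intro powr_mono2) auto
      then show ?thesis by simp
    qed
    have "u \<in> {0<..1} \<inter> {u. parmap \<nu> \<beta> u \<le> x} \<longleftrightarrow> u \<in> {(\<nu> / x) powr \<beta> .. 1}" for u
    proof (cases "u > 0")
      case True then show ?thesis using parmap_le_iff[OF nu be True x0] by auto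
    next
      case False
      have "\<not> ((\<nu> / x) powr \<beta> \<le> u)" using a0 False by linarith
      then show ?thesis using False by auto
    qed
    then have "{0<..1} \<inter> {u. parmap \<nu> \<beta> u \<le> x} = {(\<nu> / x) powr \<beta> .. 1}" by blast
    then show ?thesis using True a1 by (simp add: pareto_cdf_def)
  next
    case False
    have "{0<..1} \<inter> {u. parmap \<nu> \<beta> u \<le> x} \<subseteq> {1}"
    proof
      fix u assume u: "u \<in> {0<..1} \<inter> {u. parmap \<nu> \<beta> u \<le> x}"
      then have "parmap \<nu> \<beta> u \<le> \<nu>" using False by auto
      then have "(\<nu> / \<nu>) powr \<beta> \<le> u" using parmap_le_iff[OF nu be _ nu] u by auto
      then show "u \<in> {1}" using u nu by auto
    qed
    then have "emeasure lborel ({0<..1} \<inter> {u. parmap \<nu> \<beta> u \<le> x}) \<le> emeasure lborel {1::real}"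
      by (intro emeasure_mono) auto
    then have "emeasure lborel ({0<..1} \<inter> {u. parmap \<nu> \<beta> u \<le> x}) = 0" by simp
    then show ?thesis using False by (simp add: pareto_cdf_def measure_def)
  qed
  finally show "cdf (Par \<nu> \<beta>) x = pareto_cdf \<nu> \<beta> x" .
qed

lemma pareto_cdf_ge:
  assumes "\<nu> > 0" "\<nu> \<le> y" shows "pareto_cdf \<nu> \<beta> y = 1 - (\<nu> / y) powr \<beta>"
  using assms by (auto simp: pareto_cdf_def)

lemma nn_integral_Par:
  assumes nu: "\<nu> > 0" and be: "\<beta> > 0" and a: "a \<ge> 0"
    and h[measurable]: "h \<in> borel_measurable borel"
    and hu: "\<And>u. 0 < u \<Longrightarrow> u \<le> 1 \<Longrightarrow> h (parmap \<nu> \<beta> u) = (u * a) ^ m"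
  shows "(\<integral>\<^sup>+ y. ennreal (h y) \<partial>Par \<nu> \<beta>) = ennreal (a ^ m / real (Suc m))"
proof -
  have "(\<integral>\<^sup>+ y. ennreal (h y) \<partial>Par \<nu> \<beta>) = (\<integral>\<^sup>+ u. ennreal (h (parmap \<nu> \<beta> u)) \<partial>U01)"
    unfolding Par_def by (subst nn_integral_distr) auto
  also have "\<dots> = (\<integral>\<^sup>+ u. ennreal (h (parmap \<nu> \<beta> u)) * indicator {0<..1} u \<partial>lborel)"
    by (rule nn_integral_U01) measurable
  also have "\<dots> = (\<integral>\<^sup>+ u. ennreal (a ^ m * u ^ m) * indicator {0..1} u \<partial>lborel)"
  proof (rule nn_integral_cong_AE)
    show "AE u in lborel. ennreal (h (parmap \<nu> \<beta> u)) * indicator {0<..1} u = ennreal (a ^ m * u ^ m) * indicator {0..1} u"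
      using AE_lborel_singleton[of 0]
      by eventually_elim (auto simp: hu power_mult_distrib mult.commute split: split_indicator)
  qed
  also have "\<dots> = ennreal (a ^ m / real (Suc m))"
  proof (rule nn_integral_has_integral_lebesgue')
    show "\<And>x. x \<in> {0..1} \<Longrightarrow> 0 \<le> a ^ m * x ^ m" using a by auto
    have "((\<lambda>u. u ^ m) has_integral (1 ^ Suc m / real (Suc m) - 0 ^ Suc m / real (Suc m))) {0..1}"
    proof (rule fundamental_theorem_of_calculus)
      fix x :: real assume "x \<in> {0..1}"
      have "((\<lambda>u. u ^ Suc m) has_real_derivative (real (Suc m) * x ^ (Suc m - Suc 0))) (at x within {0..1})"
        by (rule DERIV_pow)
      then have "((\<lambda>u. u ^ Suc m) has_real_derivative (real (Suc m) * x ^ m)) (at x within {0..1})" by simp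
      from DERIV_cdivide[OF this, of "real (Suc m)"]
      have "((\<lambda>u. u ^ Suc m / real (Suc m)) has_real_derivative (real (Suc m) * x ^ m / real (Suc m))) (at x within {0..1})" .
      then show "((\<lambda>u. u ^ Suc m / real (Suc m)) has_vector_derivative x ^ m) (at x within {0..1})"
        by (simp add: has_real_derivative_iff_has_vector_derivative[symmetric] del: of_nat_Suc)
    qed simp
    then have "((\<lambda>u. u ^ m) has_integral (1 / real (Suc m))) {0..1}" by simp
    from has_integral_mult_right[OF this, of "a ^ m"]
    show "((\<lambda>u. a ^ m * u ^ m) has_integral (a ^ m / real (Suc m))) {0..1}" by simp
  qed
  finally show ?thesis .
qed




lemma fubini_min:
  fixes X :: "nat \<Rightarrow> 'a \<Rightarrow> real" and P :: "real measure" and Q :: "real \<Rightarrow> real \<Rightarrow> bool"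
  assumes ps: "prob_space M"
    and ind: "prob_space.indep_vars M (\<lambda>_. borel) X UNIV"
    and rv[measurable]: "\<And>i. X i \<in> borel_measurable M"
    and dist: "\<And>i. distr M borel (X i) = P"
    and I: "finite I" "I \<noteq> {}" "j \<notin> I"
    and Qm: "{p :: real \<times> real. Q (fst p) (snd p)} \<in> sets (borel \<Otimes>\<^sub>M borel)"
  shows "emeasure M {\<omega> \<in> space M. \<forall>i\<in>I. Q (X j \<omega>) (X i \<omega>)}
           = (\<integral>\<^sup>+ y. ennreal (measure P {x. Q y x} ^ card I) \<partial>P)"
proof -
  interpret prob_space M by (rule ps)
  define V where "V = (\<lambda>\<omega>. \<lambda>i\<in>I. X i \<omega>)"
  let ?PI = "PiM I (\<lambda>_. borel :: real measure)"
  have Vm[measurable]: "V \<in> measurable M ?PI"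
    unfolding V_def by (intro measurable_restrict) auto
  have iv0: "indep_var (PiM {j} (\<lambda>_. borel)) (\<lambda>\<omega>. restrict (\<lambda>i. X i \<omega>) {j}) ?PI V"
    unfolding V_def using I by (intro indep_var_restrict[OF ind]) auto
  define W where "W = (\<lambda>\<omega>. \<lambda>i\<in>{j}. X i \<omega>)"
  let ?PJ = "PiM {j} (\<lambda>_. borel :: real measure)"
  have Wm[measurable]: "W \<in> measurable M ?PJ"
    unfolding W_def by (intro measurable_restrict) auto
  have iv: "indep_var ?PJ W ?PI V" using iv0 by (simp add: W_def)
  then have eq: "distr M ?PJ W \<Otimes>\<^sub>M distr M ?PI V = distr M (?PJ \<Otimes>\<^sub>M ?PI) (\<lambda>\<omega>. (W \<omega>, V \<omega>))"
    by (simp add: indep_var_distribution_eq)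
  define S where "S = {p \<in> space (?PJ \<Otimes>\<^sub>M ?PI). \<forall>i\<in>I. Q (fst p j) (snd p i)}"
  have Sm: "S \<in> sets (?PJ \<Otimes>\<^sub>M ?PI)"
    unfolding S_def
  proof (rule sets.sets_Collect_finite_All'[OF _ I(1,2)])
    fix i assume i: "i \<in> I"
    have m: "(\<lambda>p. (fst p j, snd p i)) \<in> measurable (?PJ \<Otimes>\<^sub>M ?PI) (borel \<Otimes>\<^sub>M borel)"
      using i by measurable
    have "{p \<in> space (?PJ \<Otimes>\<^sub>M ?PI). Q (fst p j) (snd p i)}
        = (\<lambda>p. (fst p j, snd p i)) -` {p. Q (fst p) (snd p)} \<inter> space (?PJ \<Otimes>\<^sub>M ?PI)" by auto
    also have "\<dots> \<in> sets (?PJ \<Otimes>\<^sub>M ?PI)" by (rule measurable_sets[OF m Qm])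
    finally show "{p \<in> space (?PJ \<Otimes>\<^sub>M ?PI). Q (fst p j) (snd p i)} \<in> sets (?PJ \<Otimes>\<^sub>M ?PI)" .
  qed
  have hm[measurable]: "(\<lambda>y. measure P {x. Q y x}) \<in> borel_measurable borel"
  proof -
    interpret PP: prob_space P using dist[of j] prob_space_distr[OF rv[of j]] by simp
    have sP: "sets P = sets borel" using dist[of j] by (metis sets_distr)
    have "(\<lambda>y. emeasure P (Pair y -` {p. Q (fst p) (snd p)})) \<in> borel_measurable (borel :: real measure)"
      using PP.measurable_emeasure_Pair[of "{p. Q (fst p) (snd p)}" borel] Qm sP
      by (simp add: sets_pair_measure_cong[OF refl sP])
    then have "(\<lambda>y. enn2real (emeasure P (Pair y -` {p. Q (fst p) (snd p)}))) \<in> borel_measurable (borel :: real measure)"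
      by measurable
    then show ?thesis by (simp add: measure_def vimage_def)
  qed
  have XVm: "(\<lambda>\<omega>. (W \<omega>, V \<omega>)) \<in> measurable M (?PJ \<Otimes>\<^sub>M ?PI)" by measurable
  have "{\<omega> \<in> space M. \<forall>i\<in>I. Q (X j \<omega>) (X i \<omega>)} = (\<lambda>\<omega>. (W \<omega>, V \<omega>)) -` S \<inter> space M"
    using measurable_space[OF XVm] by (auto simp: S_def V_def W_def)
  then have "emeasure M {\<omega> \<in> space M. \<forall>i\<in>I. Q (X j \<omega>) (X i \<omega>)}
      = emeasure (distr M (?PJ \<Otimes>\<^sub>M ?PI) (\<lambda>\<omega>. (W \<omega>, V \<omega>))) S"
    by (simp add: emeasure_distr[OF XVm Sm])
  also have "\<dots> = emeasure (distr M ?PJ W \<Otimes>\<^sub>M distr M ?PI V) S"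
    using eq by simp
  also have "\<dots> = (\<integral>\<^sup>+ w. emeasure (distr M ?PI V) (Pair w -` S) \<partial>distr M ?PJ W)"
  proof -
    interpret D: prob_space "distr M ?PI V" by (rule prob_space_distr) simp
    show ?thesis using Sm by (intro D.emeasure_pair_measure_alt) auto
  qed
  also have "\<dots> = (\<integral>\<^sup>+ w. ennreal (measure P {x. Q (w j) x} ^ card I) \<partial>distr M ?PJ W)"
  proof (rule nn_integral_cong)
    fix w :: "nat \<Rightarrow> real" assume "w \<in> space (distr M ?PJ W)"
    then have wsp: "w \<in> space ?PJ" by simp
    define y where "y = w j"
    have Qy: "{x. Q y x} \<in> sets borel"
    proof -
      have "Pair y -` {p. Q (fst p) (snd p)} \<in> sets borel" by (rule sets_Pair1[OF Qm])
      then show ?thesis by (simp add: vimage_def)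
    qed
    have "V -` (Pair w -` S) \<inter> space M = (\<Inter>i\<in>I. X i -` {x. Q y x} \<inter> space M)"
      using measurable_space[OF Vm] I(2) wsp by (auto simp: S_def V_def space_pair_measure y_def)
    moreover have "Pair w -` S \<in> sets ?PI" using Sm by (rule sets_Pair1)
    ultimately have "emeasure (distr M ?PI V) (Pair w -` S) = emeasure M (\<Inter>i\<in>I. X i -` {x. Q y x} \<inter> space M)"
      by (simp add: emeasure_distr)
    also have "\<dots> = ennreal (prob (\<Inter>i\<in>I. X i -` {x. Q y x} \<inter> space M))"
      by (simp add: emeasure_eq_measure)
    also have "prob (\<Inter>i\<in>I. X i -` {x. Q y x} \<inter> space M) = (\<Prod>i\<in>I. prob (X i -` {x. Q y x} \<inter> space M))"
      using I Qy by (intro indep_varsD[OF ind]) auto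
    also have "\<dots> = (\<Prod>i\<in>I. measure P {x. Q y x})"
    proof (rule prod.cong)
      fix i assume "i \<in> I"
      have "measure P {x. Q y x} = measure (distr M borel (X i)) {x. Q y x}" using dist[of i] by simp
      also have "\<dots> = prob (X i -` {x. Q y x} \<inter> space M)" using Qy by (simp add: measure_distr)
      finally show "prob (X i -` {x. Q y x} \<inter> space M) = measure P {x. Q y x}" by simp
    qed simp
    also have "\<dots> = measure P {x. Q y x} ^ card I" by simp
    finally show "emeasure (distr M ?PI V) (Pair w -` S) = ennreal (measure P {x. Q (w j) x} ^ card I)"
      by (simp add: y_def)
  qed
  also have "\<dots> = (\<integral>\<^sup>+ \<omega>. ennreal (measure P {x. Q (X j \<omega>) x} ^ card I) \<partial>M)"
    by (subst nn_integral_distr) (auto simp: W_def)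
  also have "\<dots> = (\<integral>\<^sup>+ y. ennreal (measure P {x. Q y x} ^ card I) \<partial>distr M borel (X j))"
    by (subst nn_integral_distr) auto
  also have "\<dots> = (\<integral>\<^sup>+ y. ennreal (measure P {x. Q y x} ^ card I) \<partial>P)"
    using dist[of j] by simp
  finally show ?thesis .
qed




lemma measure_sec_measurable:
  fixes P :: "real measure"
  assumes "prob_space P" and sP: "sets P = sets borel"
    and Qm: "{p::real\<times>real. Q (fst p) (snd p)} \<in> sets (borel \<Otimes>\<^sub>M borel)"
  shows "(\<lambda>y. measure P {x. Q y x}) \<in> borel_measurable borel"
proof -
  interpret PP: prob_space P by fact
  have "(\<lambda>y. emeasure P (Pair y -` {p. Q (fst p) (snd p)})) \<in> borel_measurable (borel :: real measure)"
    using PP.measurable_emeasure_Pair[of "{p. Q (fst p) (snd p)}" borel] Qm sP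
    by (simp add: sets_pair_measure_cong[OF refl sP])
  then have "(\<lambda>y. enn2real (emeasure P (Pair y -` {p. Q (fst p) (snd p)}))) \<in> borel_measurable (borel :: real measure)"
    by measurable
  then show ?thesis by (simp add: measure_def vimage_def)
qed

lemma Qc_sets: "{p::real\<times>real. fst p < snd p \<and> snd p \<le> c * fst p} \<in> sets (borel \<Otimes>\<^sub>M borel)"
proof -
  have "{p \<in> space (borel \<Otimes>\<^sub>M borel). fst p < snd p \<and> snd p \<le> c * fst p} \<in> sets (borel \<Otimes>\<^sub>M (borel :: real measure))"
    by measurable
  then show ?thesis by (simp add: space_pair_measure)
qed

lemma Qinf_sets: "{p::real\<times>real. fst p < snd p} \<in> sets (borel \<Otimes>\<^sub>M borel)"
proof -
  have "{p \<in> space (borel \<Otimes>\<^sub>M borel). fst p < snd p} \<in> sets (borel \<Otimes>\<^sub>M (borel :: real measure))"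
    by measurable
  then show ?thesis by (simp add: space_pair_measure)
qed

locale parsetup =
  fixes M :: "'a measure" and X :: "nat \<Rightarrow> 'a \<Rightarrow> real" and \<nu> \<beta> :: real
  assumes ps: "prob_space M" and nu: "\<nu> > 0" and be: "\<beta> > 0"
    and rv[measurable]: "\<And>i. X i \<in> borel_measurable M"
    and ind: "prob_space.indep_vars M (\<lambda>_. borel) X UNIV"
    and cdfX: "\<And>i. cdf (distr M borel (X i)) = pareto_cdf \<nu> \<beta>"
begin

sublocale prob_space M by (rule ps)

lemma distX: "distr M borel (X i) = Par \<nu> \<beta>"
  by (rule cdf_unique) (auto simp: real_distribution_Par cdfX cdf_Par nu be)

lemma sets_Par[simp]: "sets (Par \<nu> \<beta>) = sets borel"
  by (simp add: Par_def)

lemma prob_space_Par: "prob_space (Par \<nu> \<beta>)"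
  using real_distribution_Par by (simp add: real_distribution_def)

lemma measure_Qc:
  assumes y: "\<nu> \<le> y" and c: "1 \<le> c"
  shows "measure (Par \<nu> \<beta>) {x. y < x \<and> x \<le> c * y} = (\<nu> / y) powr \<beta> * (1 - c powr (-\<beta>))"
proof (cases "c = 1")
  case True
  have e: "{x. y < x \<and> x \<le> c * y} = {}" using True by auto
  have "1 - c powr (-\<beta>) = 0" using True by simp
  then show ?thesis by (simp only: e measure_empty mult_zero_right)
next
  case False
  have y0: "y > 0" using y nu by simp
  then have ycy: "y < c * y" using c False by simp
  interpret F: finite_borel_measure "Par \<nu> \<beta>"
    using real_distribution_Par by (rule real_distribution.finite_borel_measure_M)
  have "measure (Par \<nu> \<beta>) {x. y < x \<and> x \<le> c * y} = measure (Par \<nu> \<beta>) {y<..c*y}"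
    by (simp add: greaterThanAtMost_def greaterThan_def atMost_def Collect_conj_eq)
  also have "\<dots> = cdf (Par \<nu> \<beta>) (c * y) - cdf (Par \<nu> \<beta>) y"
    by (rule F.cdf_diff_eq[OF ycy, symmetric])
  also have "\<dots> = (1 - (\<nu> / (c * y)) powr \<beta>) - (1 - (\<nu> / y) powr \<beta>)"
    using pareto_cdf_ge[OF nu y] pareto_cdf_ge[of \<nu> "c * y"] y ycy nu be by (simp add: cdf_Par)
  also have "(\<nu> / (c * y)) powr \<beta> = (\<nu> / y) powr \<beta> * c powr (-\<beta>)"
  proof -
    have eq: "\<nu> / (c * y) = (\<nu> / y) * (1 / c)" by simp
    have "(\<nu> / (c * y)) powr \<beta> = (\<nu> / y) powr \<beta> * (1 / c) powr \<beta>"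
      unfolding eq using nu y0 c by (intro powr_mult)
    also have "(1 / c) powr \<beta> = c powr (-\<beta>)" using c by (simp add: powr_minus_divide powr_divide)
    finally show ?thesis .
  qed
  finally show ?thesis by (simp add: algebra_simps)
qed

lemma measure_Qinf:
  assumes y: "\<nu> \<le> y"
  shows "measure (Par \<nu> \<beta>) {x. y < x} = (\<nu> / y) powr \<beta>"
proof -
  interpret P: prob_space "Par \<nu> \<beta>" by (rule prob_space_Par)
  have "{x. y < x} = space (Par \<nu> \<beta>) - {..y}" by (auto simp: Par_def)
  then have "measure (Par \<nu> \<beta>) {x. y < x} = 1 - measure (Par \<nu> \<beta>) {..y}"
    by (simp add: P.prob_compl)
  also have "measure (Par \<nu> \<beta>) {..y} = pareto_cdf \<nu> \<beta> y"
    using cdf_Par[OF nu be] by (simp add: cdf_def fun_eq_iff)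
  finally show ?thesis using y nu by (simp add: pareto_cdf_ge)
qed

lemma parmap_ge': "0 < u \<Longrightarrow> u \<le> 1 \<Longrightarrow> \<nu> \<le> parmap \<nu> \<beta> u"
  using parmap_ge[OF nu be] by simp

lemma probE:
  assumes n: "n \<ge> 2" and j: "j \<in> {1..n}" and c: "1 \<le> c"
  shows "emeasure M {\<omega> \<in> space M. \<forall>i\<in>{1..n}-{j}. X j \<omega> < X i \<omega> \<and> X i \<omega> \<le> c * X j \<omega>}
     = ennreal ((1 - c powr (-\<beta>)) ^ (n - 1) / real n)"
proof -
  have cI: "card ({1..n}-{j}) = n - 1" using j by simp
  have "(if j = 1 then 2 else 1) \<in> {1..n}-{j}" using n j by auto
  then have ne: "{1..n}-{j} \<noteq> {}" by blast
  have "emeasure M {\<omega> \<in> space M. \<forall>i\<in>{1..n}-{j}. X j \<omega> < X i \<omega> \<and> X i \<omega> \<le> c * X j \<omega>}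
     = (\<integral>\<^sup>+ y. ennreal (measure (Par \<nu> \<beta>) {x. y < x \<and> x \<le> c * y} ^ (n - 1)) \<partial>Par \<nu> \<beta>)"
    using fubini_min[OF ps ind rv distX _ ne _ Qc_sets[of c]] cI by simp
  also have "\<dots> = ennreal ((1 - c powr (-\<beta>)) ^ (n - 1) / real (Suc (n - 1)))"
  proof (rule nn_integral_Par[OF nu be])
    show "0 \<le> 1 - c powr (-\<beta>)"
    proof -
      have "c powr (-\<beta>) \<le> 1 powr (-\<beta>)" using c be by (intro powr_mono2') auto
      then show ?thesis by simp
    qed
    show "(\<lambda>y. measure (Par \<nu> \<beta>) {x. y < x \<and> x \<le> c * y} ^ (n - 1)) \<in> borel_measurable borel"
      using measure_sec_measurable[OF prob_space_Par sets_Par Qc_sets[of c]] by measurable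
    fix u :: real assume u: "0 < u" "u \<le> 1"
    show "measure (Par \<nu> \<beta>) {x. parmap \<nu> \<beta> u < x \<and> x \<le> c * parmap \<nu> \<beta> u} ^ (n - 1) = (u * (1 - c powr (-\<beta>))) ^ (n - 1)"
      using measure_Qc[OF parmap_ge'[OF u] c] parmap_pow[OF nu be u(1)] by simp
  qed
  also have "real (Suc (n - 1)) = real n" using n by simp
  finally show ?thesis .
qed

lemma probEinf:
  assumes n: "n \<ge> 2" and j: "j \<in> {1..n}"
  shows "emeasure M {\<omega> \<in> space M. \<forall>i\<in>{1..n}-{j}. X j \<omega> < X i \<omega>} = ennreal (1 / real n)"
proof -
  have cI: "card ({1..n}-{j}) = n - 1" using j by simp
  have "(if j = 1 then 2 else 1) \<in> {1..n}-{j}" using n j by auto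
  then have ne: "{1..n}-{j} \<noteq> {}" by blast
  have "emeasure M {\<omega> \<in> space M. \<forall>i\<in>{1..n}-{j}. X j \<omega> < X i \<omega>}
     = (\<integral>\<^sup>+ y. ennreal (measure (Par \<nu> \<beta>) {x. y < x} ^ (n - 1)) \<partial>Par \<nu> \<beta>)"
    using fubini_min[OF ps ind rv distX _ ne _ Qinf_sets] cI by simp
  also have "\<dots> = ennreal (1 ^ (n - 1) / real (Suc (n - 1)))"
  proof (rule nn_integral_Par[OF nu be])
    show "(0::real) \<le> 1" by simp
    show "(\<lambda>y. measure (Par \<nu> \<beta>) {x. y < x} ^ (n - 1)) \<in> borel_measurable borel"
      using measure_sec_measurable[OF prob_space_Par sets_Par Qinf_sets] by measurable
    fix u :: real assume u: "0 < u" "u \<le> 1"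
    show "measure (Par \<nu> \<beta>) {x. parmap \<nu> \<beta> u < x} ^ (n - 1) = (u * 1) ^ (n - 1)"
      using measure_Qinf[OF parmap_ge'[OF u]] parmap_pow[OF nu be u(1)] by simp
  qed
  also have "real (Suc (n - 1)) = real n" using n by simp
  finally show ?thesis by simp
qed

end



context parsetup
begin

lemma AE_pos: "AE \<omega> in M. \<forall>i\<in>{1..n}. \<nu> < X i \<omega>"
proof (rule AE_finite_allI)
  fix i
  interpret P: prob_space "Par \<nu> \<beta>" by (rule prob_space_Par)
  have "emeasure (Par \<nu> \<beta>) {..\<nu>} = ennreal (measure (Par \<nu> \<beta>) {..\<nu>})"
    by (simp add: P.emeasure_eq_measure)
  also have "measure (Par \<nu> \<beta>) {..\<nu>} = 0"
    using cdf_Par[OF nu be] by (simp add: cdf_def fun_eq_iff pareto_cdf_def)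
  finally have "{..\<nu>} \<in> null_sets (Par \<nu> \<beta>)" by (intro null_setsI) auto
  then have "AE y in Par \<nu> \<beta>. \<nu> < y" by (rule AE_I') auto
  then have "AE y in distr M borel (X i). \<nu> < y" unfolding distX .
  then show "AE \<omega> in M. \<nu> < X i \<omega>" by (subst (asm) AE_distr_iff) auto
qed simp

lemma AE_unique_min:
  assumes n: "n \<ge> 2"
  shows "AE \<omega> in M. \<exists>j\<in>{1..n}. \<forall>i\<in>{1..n}-{j}. X j \<omega> < X i \<omega>"
proof -
  let ?E = "\<lambda>j. {\<omega> \<in> space M. \<forall>i\<in>{1..n}-{j}. X j \<omega> < X i \<omega>}"
  have Em: "?E j \<in> sets M" for j by measurable
  have disj: "disjoint_family_on ?E {1..n}"
    unfolding disjoint_family_on_def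
  proof (intro ballI impI)
    fix j k assume j: "j \<in> {1..n}" and k: "k \<in> {1..n}" and jk: "j \<noteq> k"
    show "?E j \<inter> ?E k = {}"
    proof (rule ccontr)
      assume "?E j \<inter> ?E k \<noteq> {}"
      then obtain \<omega> where "\<omega> \<in> ?E j" "\<omega> \<in> ?E k" by blast
      then have "X j \<omega> < X k \<omega>" "X k \<omega> < X j \<omega>" using j k jk by auto
      then show False by simp
    qed
  qed
  have "prob (\<Union>j\<in>{1..n}. ?E j) = (\<Sum>j\<in>{1..n}. prob (?E j))"
    using disj Em by (intro finite_measure_finite_Union) auto
  also have "\<dots> = (\<Sum>j\<in>{1..n}. 1 / real n)"
  proof (rule sum.cong)
    fix j assume "j \<in> {1..n}"
    then have "emeasure M (?E j) = ennreal (1 / real n)" by (rule probEinf[OF n])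
    then show "prob (?E j) = 1 / real n" by (simp add: measure_def)
  qed simp
  also have "\<dots> = 1" using n by simp
  finally have "AE \<omega> in M. \<omega> \<in> (\<Union>j\<in>{1..n}. ?E j)" by (rule AE_prob_1)
  then show ?thesis by eventually_elim auto
qed

lemma pointwise:
  assumes pos: "\<forall>i\<in>{1..n}. \<nu> < X i \<omega>" and j: "j \<in> {1..n}"
    and jmin: "\<forall>i\<in>{1..n}-{j}. X j \<omega> < X i \<omega>"
  shows "sample_min X n \<omega> = X j \<omega>"
    and "\<beta> * (ln (sample_max X n \<omega>) - ln (sample_min X n \<omega>)) \<le> t \<longleftrightarrow>
         (\<forall>i\<in>{1..n}. X i \<omega> \<le> exp (t / \<beta>) * X j \<omega>)"
proof -
  show mn: "sample_min X n \<omega> = X j \<omega>"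
    unfolding sample_min_def
  proof (rule Min_eqI)
    fix y assume "y \<in> (\<lambda>i. X i \<omega>) ` {1..n}"
    then obtain i where i: "i \<in> {1..n}" "y = X i \<omega>" by auto
    then show "X j \<omega> \<le> y" using jmin by (cases "i = j") (auto intro: less_imp_le)
  qed (use j in auto)
  have xj: "X j \<omega> > 0" using pos j nu by force
  have fin: "finite ((\<lambda>i. X i \<omega>) ` {1..n})" "(\<lambda>i. X i \<omega>) ` {1..n} \<noteq> {}" using j by auto
  have mx: "sample_max X n \<omega> \<ge> X j \<omega>"
    unfolding sample_max_def using fin j by (intro Max_ge) auto
  then have mx0: "sample_max X n \<omega> > 0" using xj by linarith
  have "\<beta> * (ln (sample_max X n \<omega>) - ln (sample_min X n \<omega>)) \<le> t \<longleftrightarrow>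
        ln (sample_max X n \<omega>) \<le> ln (X j \<omega>) + t / \<beta>"
    using be mn by (simp add: field_simps)
  also have "\<dots> \<longleftrightarrow> sample_max X n \<omega> \<le> exp (ln (X j \<omega>) + t / \<beta>)"
    using mx0 by (metis exp_le_cancel_iff exp_ln)
  also have "exp (ln (X j \<omega>) + t / \<beta>) = exp (t / \<beta>) * X j \<omega>"
    using xj by (simp add: exp_add)
  also have "sample_max X n \<omega> \<le> exp (t / \<beta>) * X j \<omega> \<longleftrightarrow> (\<forall>i\<in>{1..n}. X i \<omega> \<le> exp (t / \<beta>) * X j \<omega>)"
    unfolding sample_max_def using fin by (simp add: Max_le_iff)
  finally show "\<beta> * (ln (sample_max X n \<omega>) - ln (sample_min X n \<omega>)) \<le> t \<longleftrightarrow>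
         (\<forall>i\<in>{1..n}. X i \<omega> \<le> exp (t / \<beta>) * X j \<omega>)" .
qed

definition RR :: "nat \<Rightarrow> 'a \<Rightarrow> real" where
  "RR n \<omega> = \<beta> * (ln (sample_max X n \<omega>) - ln (sample_min X n \<omega>))"

lemma RR_measurable[measurable]: "RR n \<in> borel_measurable M"
  unfolding RR_def[abs_def] sample_max_def[abs_def] sample_min_def[abs_def] by measurable

lemma prob_RR:
  assumes n: "n \<ge> 2"
  shows "prob {\<omega> \<in> space M. RR n \<omega> \<le> t} = (if t < 0 then 0 else (1 - exp (-t)) ^ (n - 1))"
proof (cases "t < 0")
  case True
  have "AE \<omega> in M. \<omega> \<in> {\<omega> \<in> space M. RR n \<omega> \<le> t} \<longleftrightarrow> \<omega> \<in> {}"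
    using AE_pos[of n] AE_unique_min[OF n]
  proof eventually_elim
    case (elim \<omega>)
    then obtain j where j: "j \<in> {1..n}" and jmin: "\<forall>i\<in>{1..n}-{j}. X j \<omega> < X i \<omega>" by blast
    have xj: "X j \<omega> > 0" using elim(1) j nu by force
    have "exp (t / \<beta>) < 1" using True be by (simp add: divide_neg_pos)
    then have "\<not> X j \<omega> \<le> exp (t / \<beta>) * X j \<omega>" using xj by (simp add: not_le mult_less_cancel_right1)
    then have "\<not> RR n \<omega> \<le> t"
      unfolding RR_def using pointwise(2)[OF elim(1) j jmin, of t] j by auto
    then show ?case by simp
  qed
  then have "prob {\<omega> \<in> space M. RR n \<omega> \<le> t} = prob {}"
    by (rule measure_eq_AE) auto
  then show ?thesis using True by simp
next
  case False
  define c where "c = exp (t / \<beta>)"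
  have c1: "1 \<le> c" using False be unfolding c_def by simp
  let ?E = "\<lambda>j. {\<omega> \<in> space M. \<forall>i\<in>{1..n}-{j}. X j \<omega> < X i \<omega> \<and> X i \<omega> \<le> c * X j \<omega>}"
  have Em: "?E j \<in> sets M" for j by measurable
  have "AE \<omega> in M. \<omega> \<in> {\<omega> \<in> space M. RR n \<omega> \<le> t} \<longleftrightarrow> \<omega> \<in> (\<Union>j\<in>{1..n}. ?E j)"
    using AE_pos[of n] AE_unique_min[OF n] AE_space
  proof eventually_elim
    case (elim \<omega>)
    then obtain j where j: "j \<in> {1..n}" and jmin: "\<forall>i\<in>{1..n}-{j}. X j \<omega> < X i \<omega>" by blast
    have xj: "X j \<omega> > 0" using elim(1) j nu by force
    have "\<omega> \<in> (\<Union>j\<in>{1..n}. ?E j) \<longleftrightarrow> \<omega> \<in> ?E j"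
    proof
      assume "\<omega> \<in> (\<Union>j\<in>{1..n}. ?E j)"
      then obtain k where k: "k \<in> {1..n}" "\<omega> \<in> ?E k" by blast
      have "k = j"
      proof (rule ccontr)
        assume "k \<noteq> j"
        then have "X k \<omega> < X j \<omega>" "X j \<omega> < X k \<omega>" using k j jmin by auto
        then show False by simp
      qed
      then show "\<omega> \<in> ?E j" using k by simp
    qed (use j in auto)
    also have "\<dots> \<longleftrightarrow> (\<forall>i\<in>{1..n}. X i \<omega> \<le> c * X j \<omega>)"
    proof
      assume "\<omega> \<in> ?E j"
      moreover have "X j \<omega> \<le> c * X j \<omega>" using c1 xj by simp
      ultimately show "\<forall>i\<in>{1..n}. X i \<omega> \<le> c * X j \<omega>" by auto
    next
      assume "\<forall>i\<in>{1..n}. X i \<omega> \<le> c * X j \<omega>"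
      then show "\<omega> \<in> ?E j" using jmin elim(3) by auto
    qed
    also have "\<dots> \<longleftrightarrow> RR n \<omega> \<le> t"
      unfolding RR_def c_def using pointwise(2)[OF elim(1) j jmin, of t] by simp
    finally show ?case using elim(3) by auto
  qed
  then have "prob {\<omega> \<in> space M. RR n \<omega> \<le> t} = prob (\<Union>j\<in>{1..n}. ?E j)"
    by (rule measure_eq_AE) (auto intro!: Em)
  also have "\<dots> = (\<Sum>j\<in>{1..n}. prob (?E j))"
  proof (rule finite_measure_finite_Union)
    show "disjoint_family_on ?E {1..n}"
      unfolding disjoint_family_on_def
    proof (intro ballI impI)
      fix j k assume j: "j \<in> {1..n}" and k: "k \<in> {1..n}" and jk: "j \<noteq> k"
      show "?E j \<inter> ?E k = {}"
      proof (rule ccontr)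
        assume "?E j \<inter> ?E k \<noteq> {}"
        then obtain \<omega> where "\<omega> \<in> ?E j" "\<omega> \<in> ?E k" by blast
        then have "X j \<omega> < X k \<omega>" "X k \<omega> < X j \<omega>" using j k jk by auto
        then show False by simp
      qed
    qed
  qed (auto intro!: Em)
  also have "\<dots> = (\<Sum>j\<in>{1..n}. (1 - c powr (-\<beta>)) ^ (n - 1) / real n)"
  proof (rule sum.cong)
    fix j assume "j \<in> {1..n}"
    then have "emeasure M (?E j) = ennreal ((1 - c powr (-\<beta>)) ^ (n - 1) / real n)"
      by (rule probE[OF n _ c1])
    moreover have "(1 - c powr (-\<beta>)) ^ (n - 1) / real n \<ge> 0"
    proof -
      have "c powr (-\<beta>) \<le> 1 powr (-\<beta>)" using c1 be by (intro powr_mono2') auto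
      then show ?thesis by simp
    qed
    ultimately show "prob (?E j) = (1 - c powr (-\<beta>)) ^ (n - 1) / real n" by (simp add: measure_def)
  qed simp
  also have "\<dots> = (1 - c powr (-\<beta>)) ^ (n - 1)" using n by simp
  also have "c powr (-\<beta>) = exp (-t)"
    unfolding c_def using be by (simp add: powr_def)
  finally show ?thesis using False by simp
qed

lemma distr_RR:
  assumes n: "n \<ge> 2"
  shows "distr M borel (RR n) = mu (n - 1)"
proof (rule cdf_unique)
  show "real_distribution (distr M borel (RR n))" by simp
  show "real_distribution (mu (n - 1))" using n by (intro real_distribution_mu) simp
  show "cdf (distr M borel (RR n)) = cdf (mu (n - 1))"
  proof
    fix t
    have "cdf (distr M borel (RR n)) t = prob {\<omega> \<in> space M. RR n \<omega> \<le> t}"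
      unfolding cdf_def by (subst measure_distr) (auto simp: vimage_def Collect_conj_eq Int_commute)
    also have "\<dots> = cdf (mu (n - 1)) t" using n by (simp add: prob_RR cdf_mu)
    finally show "cdf (distr M borel (RR n)) t = cdf (mu (n - 1)) t" .
  qed
qed

end



context parsetup
begin

lemma hbRR:
  assumes n: "n \<ge> 2"
  shows "has_bochner_integral M (\<lambda>\<omega>. RR n \<omega> ^ k) (fact k * SS k (n - 1))"
proof -
  have m: "n - 1 > 0" using n by simp
  have i: "integrable (distr M borel (RR n)) (\<lambda>t. t ^ k)"
    using mu_moment(1)[OF m, of k] distr_RR[OF n] by simp
  have "integral\<^sup>L (distr M borel (RR n)) (\<lambda>t. t ^ k) = fact k * SS k (n - 1)"
    using mu_moment(2)[OF m, of k] distr_RR[OF n] by simp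
  moreover have "integrable M (\<lambda>\<omega>. RR n \<omega> ^ k)"
    using i by (subst (asm) integrable_distr_eq) auto
  moreover have "integral\<^sup>L (distr M borel (RR n)) (\<lambda>t. t ^ k) = integral\<^sup>L M (\<lambda>\<omega>. RR n \<omega> ^ k)"
    by (rule integral_distr) auto
  ultimately show ?thesis by (simp add: has_bochner_integral_iff)
qed

lemma moments:
  assumes n: "n \<ge> 2" and c: "c > 0"
  defines "Y \<equiv> (\<lambda>\<omega>. 1 + RR n \<omega> / c)"
  shows "integral\<^sup>L M Y = 1 + HH 1 (n - 1) / c"
    and "integral\<^sup>L M (\<lambda>\<omega>. (Y \<omega> - integral\<^sup>L M Y) ^ 2) = HH 2 (n - 1) / c ^ 2"
    and "integral\<^sup>L M (\<lambda>\<omega>. (Y \<omega> - integral\<^sup>L M Y) ^ 3) = 2 * HH 3 (n - 1) / c ^ 3"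
proof -
  let ?m = "n - 1"
  have m: "?m > 0" using n by simp
  define A1 where "A1 = HH 1 ?m"
  define A2 where "A2 = HH 1 ?m ^ 2 + HH 2 ?m"
  define A3 where "A3 = HH 1 ?m ^ 3 + 3 * HH 1 ?m * HH 2 ?m + 2 * HH 3 ?m"
  have h0: "has_bochner_integral M (\<lambda>\<omega>. RR n \<omega> ^ 0) 1"
    using hbRR[OF n, of 0] SS0[OF m] by simp
  have h1: "has_bochner_integral M (\<lambda>\<omega>. RR n \<omega> ^ 1) A1"
    using hbRR[OF n, of 1] SS1[of ?m] by (simp add: A1_def)
  have h2: "has_bochner_integral M (\<lambda>\<omega>. RR n \<omega> ^ 2) A2"
    using hbRR[OF n, of 2] SS2[of ?m] by (simp add: A2_def)
  have h3: "has_bochner_integral M (\<lambda>\<omega>. RR n \<omega> ^ 3) A3"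
  proof -
    have "fact 3 * SS 3 ?m = A3" using SS3[of ?m] by (simp add: A3_def fact_numeral)
    then show ?thesis using hbRR[OF n, of 3] by simp
  qed
  have hY: "has_bochner_integral M Y (1 + A1 / c)"
  proof -
    have "has_bochner_integral M (\<lambda>\<omega>. RR n \<omega> ^ 0 + (1 / c) * RR n \<omega> ^ 1) (1 + (1 / c) * A1)"
      by (rule has_bochner_integral_add[OF h0 has_bochner_integral_mult_right[OF h1]])
    then show ?thesis unfolding Y_def by (simp add: field_simps)
  qed
  then have EY: "integral\<^sup>L M Y = 1 + A1 / c" by (simp add: has_bochner_integral_iff)
  then show "integral\<^sup>L M Y = 1 + HH 1 (n - 1) / c" by (simp add: A1_def)
  have hb2: "has_bochner_integral M
     (\<lambda>\<omega>. (1 / c ^ 2) * ((RR n \<omega> ^ 2 - (2 * A1) * RR n \<omega> ^ 1) + A1 ^ 2 * RR n \<omega> ^ 0))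
     ((1 / c ^ 2) * ((A2 - (2 * A1) * A1) + A1 ^ 2 * 1))"
    by (rule has_bochner_integral_mult_right[OF has_bochner_integral_add[OF
          has_bochner_integral_diff[OF h2 has_bochner_integral_mult_right[OF h1]]
          has_bochner_integral_mult_right[OF h0]]])
  moreover have v2: "(1 / c ^ 2) * ((A2 - (2 * A1) * A1) + A1 ^ 2 * 1) = HH 2 ?m / c ^ 2"
    by (simp add: A1_def A2_def power2_eq_square)
  moreover have p2: "(\<lambda>\<omega>. (1 / c ^ 2) * ((RR n \<omega> ^ 2 - (2 * A1) * RR n \<omega> ^ 1) + A1 ^ 2 * RR n \<omega> ^ 0))
      = (\<lambda>\<omega>. (Y \<omega> - integral\<^sup>L M Y) ^ 2)"
    unfolding EY unfolding Y_def using c by (intro ext) (simp add: field_simps power2_eq_square)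
  ultimately have "has_bochner_integral M (\<lambda>\<omega>. (Y \<omega> - integral\<^sup>L M Y) ^ 2) (HH 2 ?m / c ^ 2)"
    by (simp only:)
  then show "integral\<^sup>L M (\<lambda>\<omega>. (Y \<omega> - integral\<^sup>L M Y) ^ 2) = HH 2 (n - 1) / c ^ 2"
    by (rule has_bochner_integral_integral_eq)
  have "has_bochner_integral M
     (\<lambda>\<omega>. (1 / c ^ 3) * (((RR n \<omega> ^ 3 - (3 * A1) * RR n \<omega> ^ 2) + (3 * A1 ^ 2) * RR n \<omega> ^ 1) - A1 ^ 3 * RR n \<omega> ^ 0))
     ((1 / c ^ 3) * (((A3 - (3 * A1) * A2) + (3 * A1 ^ 2) * A1) - A1 ^ 3 * 1))"
    by (rule has_bochner_integral_mult_right[OF has_bochner_integral_diff[OF has_bochner_integral_add[OF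
          has_bochner_integral_diff[OF h3 has_bochner_integral_mult_right[OF h2]]
          has_bochner_integral_mult_right[OF h1]] has_bochner_integral_mult_right[OF h0]]])
  moreover have "(1 / c ^ 3) * (((A3 - (3 * A1) * A2) + (3 * A1 ^ 2) * A1) - A1 ^ 3 * 1) = 2 * HH 3 ?m / c ^ 3"
    by (simp add: A1_def A2_def A3_def power2_eq_square power3_eq_cube algebra_simps)
  moreover have "(\<lambda>\<omega>. (1 / c ^ 3) * (((RR n \<omega> ^ 3 - (3 * A1) * RR n \<omega> ^ 2) + (3 * A1 ^ 2) * RR n \<omega> ^ 1) - A1 ^ 3 * RR n \<omega> ^ 0))
      = (\<lambda>\<omega>. (Y \<omega> - integral\<^sup>L M Y) ^ 3)"
    unfolding EY unfolding Y_def using c by (intro ext) (simp add: field_simps power2_eq_square power3_eq_cube)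
  ultimately have "has_bochner_integral M (\<lambda>\<omega>. (Y \<omega> - integral\<^sup>L M Y) ^ 3) (2 * HH 3 ?m / c ^ 3)"
    by (simp only:)
  then show "integral\<^sup>L M (\<lambda>\<omega>. (Y \<omega> - integral\<^sup>L M Y) ^ 3) = 2 * HH 3 (n - 1) / c ^ 3"
    by (rule has_bochner_integral_integral_eq)
qed

end



lemma HH1_harm: "HH 1 m = harm m"
  unfolding HH_def harm_altdef by (simp add: inverse_eq_divide)

lemma HH2_lim: "(\<lambda>n. HH 2 (n - 1)) \<longlonglongrightarrow> pi\<^sup>2 / 6"
proof -
  have "(\<lambda>m. HH 2 m) \<longlonglongrightarrow> pi\<^sup>2 / 6"
    using inverse_squares_sums unfolding sums_def HH_def by (simp add: add.commute)
  then show ?thesis by (rule filterlim_compose) (rule filterlim_minus_const_nat_at_top)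
qed

lemma summable_z3: "summable (\<lambda>k. 1 / (real (Suc k))^3)"
proof -
  have "summable (\<lambda>n. inverse (real n ^ 3))" by (rule inverse_power_summable) simp
  then have "summable (\<lambda>n. inverse (real (Suc n) ^ 3))" by (subst summable_Suc_iff)
  then show ?thesis by (simp add: inverse_eq_divide)
qed

lemma zeta3_pos: "zeta3 > 0"
  unfolding zeta3_def by (rule suminf_pos[OF summable_z3]) simp

lemma HH3_lim: "(\<lambda>n. HH 3 (n - 1)) \<longlonglongrightarrow> zeta3"
proof -
  have "(\<lambda>m. HH 3 m) \<longlonglongrightarrow> zeta3"
    using summable_LIMSEQ[OF summable_z3] unfolding zeta3_def HH_def by simp
  then show ?thesis by (rule filterlim_compose) (rule filterlim_minus_const_nat_at_top)
qed

lemma ln_nat_at_infinity: "filterlim (\<lambda>n. ln (real n)) at_infinity sequentially"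
  by (rule filterlim_at_top_imp_at_infinity, rule filterlim_compose[OF ln_at_top filterlim_real_sequentially])

lemma mean_asymp:
  assumes c: "c > 0"
  shows "((\<lambda>n. (1 + HH 1 (n - 1) / c) / (ln (real n) / c)) \<longlonglongrightarrow> 1)"
proof -
  have lim: "(\<lambda>n. (harm n - ln (real n)) / ln (real n) + 1 + (c - 1 / real n) / ln (real n)) \<longlonglongrightarrow> 0 + 1 + 0"
  proof -
    have a: "(\<lambda>n. (harm n - ln (real n)) / ln (real n)) \<longlonglongrightarrow> 0"
      by (rule tendsto_divide_0[OF euler_mascheroni_LIMSEQ ln_nat_at_infinity])
    have b: "(\<lambda>n. (c - 1 / real n) / ln (real n)) \<longlonglongrightarrow> 0"
      by (rule tendsto_divide_0[OF tendsto_diff[OF tendsto_const lim_const_over_n] ln_nat_at_infinity])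
    show ?thesis by (rule tendsto_add[OF tendsto_add[OF a tendsto_const] b])
  qed
  have ev: "eventually (\<lambda>n. (harm n - ln (real n)) / ln (real n) + 1 + (c - 1 / real n) / ln (real n)
             = (1 + HH 1 (n - 1) / c) / (ln (real n) / c)) sequentially"
    unfolding eventually_sequentially
  proof (intro exI allI impI)
    fix n :: nat assume n: "n \<ge> 2"
    have "harm n = harm (n - 1) + 1 / real n"
      using harm_Suc[of "n - 1"] n by (simp add: inverse_eq_divide)
    moreover have "ln (real n) > 0" using n by simp
    ultimately show "(harm n - ln (real n)) / ln (real n) + 1 + (c - 1 / real n) / ln (real n)
             = (1 + HH 1 (n - 1) / c) / (ln (real n) / c)"
      using c HH1_harm[of "n - 1"] by (simp add: field_simps)
  qed
  from tendsto_cong[OF ev] lim show ?thesis by simp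
qed

lemma pow32: "x > 0 \<Longrightarrow> (x ^ 2) powr (3 / 2) = (x :: real) ^ 3"
proof -
  assume x: "x > 0"
  have "(x ^ 2) powr (3 / 2) = (x powr 2) powr (3 / 2)" using x by (simp add: powr_realpow)
  also have "\<dots> = x powr 3" by (simp add: powr_powr)
  also have "\<dots> = x ^ 3" using powr_realpow[OF x, of 3] by simp
  finally show ?thesis .
qed

lemma skew_alg:
  fixes s z p c :: real
  assumes "p > 0" "c > 0"
  shows "(2 * z / c ^ 3) / (p ^ 3 / (6 * s * c ^ 3)) = 12 * s * z / p ^ 3"
  using assms by (simp add: field_simps)

lemma skew_const:
  assumes c: "c > 0"
  shows "(2 * zeta3 / c ^ 3) / ((pi\<^sup>2 / 6) / c ^ 2) powr (3 / 2) = 12 * sqrt 6 * zeta3 / pi ^ 3"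
proof -
  define a where "a = pi / (sqrt 6 * c)"
  have a0: "a > 0" unfolding a_def using c by simp
  have s2: "sqrt 6 ^ 2 = (6::real)" by simp
  have s3: "sqrt 6 ^ 3 = 6 * sqrt (6::real)"
    by (simp only: power3_eq_cube power2_eq_square[symmetric] s2 mult.assoc[symmetric])
  have e1: "(pi\<^sup>2 / 6) / c ^ 2 = a ^ 2"
    unfolding a_def power_divide power_mult_distrib s2 by simp
  have e2: "(a ^ 2) powr (3 / 2) = a ^ 3" by (rule pow32[OF a0])
  have e3: "a ^ 3 = pi ^ 3 / (6 * sqrt 6 * c ^ 3)"
    unfolding a_def power_divide power_mult_distrib s3 ..
  show ?thesis unfolding e1 e2 e3 by (rule skew_alg[OF pi_gt_zero c])
qed




theorem proposition3:
  fixes M :: "'a measure" and X :: "nat \<Rightarrow> 'a \<Rightarrow> real"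
    and \<nu> \<beta> \<rho> :: real and Mn :: "nat \<Rightarrow> 'a \<Rightarrow> real"
  assumes "prob_space M"
    and "\<nu> > 0" and "\<beta> > 0" and "\<rho> > 1"
    and "\<And>i. X i \<in> borel_measurable M"
    and "prob_space.indep_vars M (\<lambda>_. borel) X UNIV"
    and "\<And>i. cdf (distr M borel (X i)) = pareto_cdf \<nu> \<beta>"
    and "\<And>n \<omega>. Mn n \<omega> =
           (ln (sample_max X n \<omega>) - ln (sample_min X n \<omega>)) / ln \<rho> + 1"
  shows "weak_conv
           (\<lambda>n. cdf (distr M borel (\<lambda>\<omega>. (Mn n \<omega> - 1) * (\<beta> * ln \<rho>) - ln (real n))))
           (gumbel_cdf 0 1)
       \<and> (\<lambda>n. mean M (Mn n)) \<sim>[at_top] (\<lambda>n. ln (real n) / (\<beta> * ln \<rho>))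
       \<and> (\<lambda>n. var M (Mn n)) \<sim>[at_top] (\<lambda>n. pi^2 / (6 * \<beta>^2 * (ln \<rho>)^2))
       \<and> (\<lambda>n. skew M (Mn n)) \<sim>[at_top] (\<lambda>n. 12 * sqrt 6 * zeta3 / pi^3)"
proof -
  interpret P: parsetup M X \<nu> \<beta>
    by (rule parsetup.intro[OF assms(1-3,5-7)])
  define c where "c = \<beta> * ln \<rho>"
  have lr: "ln \<rho> > 0" using assms(4) by simp
  have c0: "c > 0" unfolding c_def using lr assms(3) by simp
  have MnY: "Mn n = (\<lambda>\<omega>. 1 + P.RR n \<omega> / c)" for n
    unfolding c_def P.RR_def using lr assms(3) by (intro ext) (simp add: assms(8) field_simps)
  have Mn1: "(\<lambda>\<omega>. (Mn n \<omega> - 1) * (\<beta> * ln \<rho>) - ln (real n)) = (\<lambda>\<omega>. P.RR n \<omega> - ln (real n))" for n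
    unfolding MnY c_def using lr assms(3) by (intro ext) simp
  have wc: "weak_conv (\<lambda>n. cdf (distr M borel (\<lambda>\<omega>. (Mn n \<omega> - 1) * (\<beta> * ln \<rho>) - ln (real n)))) (gumbel_cdf 0 1)"
    unfolding weak_conv_def
  proof (intro allI impI)
    fix x :: real
    define e where "e = exp (-x)"
    have cdfn: "cdf (distr M borel (\<lambda>\<omega>. (Mn n \<omega> - 1) * (\<beta> * ln \<rho>) - ln (real n))) x
        = (if x + ln (real n) < 0 then 0 else (1 - exp (- (x + ln (real n)))) ^ (n - 1))" if n: "n \<ge> 2" for n
    proof -
      have "cdf (distr M borel (\<lambda>\<omega>. (Mn n \<omega> - 1) * (\<beta> * ln \<rho>) - ln (real n))) x
          = P.prob ((\<lambda>\<omega>. P.RR n \<omega> - ln (real n)) -` {..x} \<inter> space M)"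
        unfolding Mn1 cdf_def by (subst measure_distr) auto
      also have "(\<lambda>\<omega>. P.RR n \<omega> - ln (real n)) -` {..x} \<inter> space M = {\<omega> \<in> space M. P.RR n \<omega> \<le> x + ln (real n)}"
        by auto
      finally show ?thesis using P.prob_RR[OF n] by simp
    qed
    obtain N :: nat where N: "real N > e" using reals_Archimedean2 by blast
    have ev: "eventually (\<lambda>n. (1 + (- e) / real n) ^ n / (1 + (- e) / real n)
        = cdf (distr M borel (\<lambda>\<omega>. (Mn n \<omega> - 1) * (\<beta> * ln \<rho>) - ln (real n))) x) sequentially"
      unfolding eventually_sequentially
    proof (intro exI allI impI)
      fix n assume n: "n \<ge> max 2 N"
      then have n2: "n \<ge> 2" and nN: "real n \<ge> real N" by auto
      have ne: "real n > e" using N nN by linarith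
      have e0: "e > 0" unfolding e_def by simp
      have npos: "real n > 0" using n2 by simp
      have "ln e < ln (real n)" using ne e0 by simp
      then have lx: "\<not> x + ln (real n) < 0" unfolding e_def by simp
      have ex: "exp (- (x + ln (real n))) = e / real n"
        unfolding e_def using npos by (simp add: exp_diff exp_minus field_simps)
      define q where "q = 1 + (- e) / real n"
      have q0: "q \<noteq> 0" unfolding q_def using ne npos by (simp add: field_simps)
      have q1: "1 - exp (- (x + ln (real n))) = q" unfolding q_def ex by simp
      have "q ^ n = q * q ^ (n - 1)" using n2 by (metis Suc_diff_1 less_le_trans pos2 power_Suc)
      then have "q ^ n / q = q ^ (n - 1)" using q0 by simp
      then show "(1 + (- e) / real n) ^ n / (1 + (- e) / real n)
        = cdf (distr M borel (\<lambda>\<omega>. (Mn n \<omega> - 1) * (\<beta> * ln \<rho>) - ln (real n))) x"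
        using cdfn[OF n2] lx q1 unfolding q_def by simp
    qed
    have lim: "(\<lambda>n. (1 + (- e) / real n) ^ n / (1 + (- e) / real n)) \<longlonglongrightarrow> exp (- e) / (1 + 0)"
      by (intro tendsto_divide tendsto_exp_limit_sequentially tendsto_add tendsto_const lim_const_over_n) simp
    have "exp (- e) / (1 + 0) = gumbel_cdf 0 1 x" unfolding gumbel_cdf_def e_def by simp
    with tendsto_cong[OF ev] lim
    show "(\<lambda>n. cdf (distr M borel (\<lambda>\<omega>. (Mn n \<omega> - 1) * (\<beta> * ln \<rho>) - ln (real n))) x) \<longlonglongrightarrow> gumbel_cdf 0 1 x"
      by simp
  qed
  have ev2: "eventually (\<lambda>n. n \<ge> (2::nat)) at_top" by (rule eventually_ge_at_top)
  have mean_eq: "mean M (Mn n) = 1 + HH 1 (n - 1) / c" if "n \<ge> 2" for n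
    unfolding mean_def MnY using P.moments(1)[OF that c0] by simp
  have var_eq: "var M (Mn n) = HH 2 (n - 1) / c ^ 2" if "n \<ge> 2" for n
    unfolding var_def mean_def MnY using P.moments(2)[OF that c0] by simp
  have third_eq: "skew M (Mn n) = (2 * HH 3 (n - 1) / c ^ 3) / (HH 2 (n - 1) / c ^ 2) powr (3 / 2)" if "n \<ge> 2" for n
    unfolding skew_def var_eq[OF that, symmetric] unfolding mean_def MnY using P.moments(3)[OF that c0] by simp
  have m: "(\<lambda>n. mean M (Mn n)) \<sim>[at_top] (\<lambda>n. ln (real n) / (\<beta> * ln \<rho>))"
  proof (rule asymp_equivI')
    have "eventually (\<lambda>n. (1 + HH 1 (n - 1) / c) / (ln (real n) / c) = mean M (Mn n) / (ln (real n) / (\<beta> * ln \<rho>))) at_top"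
      using ev2 by eventually_elim (simp add: mean_eq c_def)
    from tendsto_cong[OF this] mean_asymp[OF c0]
    show "((\<lambda>n. mean M (Mn n) / (ln (real n) / (\<beta> * ln \<rho>))) \<longlongrightarrow> 1) at_top" by simp
  qed
  have v: "(\<lambda>n. var M (Mn n)) \<sim>[at_top] (\<lambda>n. pi^2 / (6 * \<beta>^2 * (ln \<rho>)^2))"
  proof (rule asymp_equivI')
    have K: "pi^2 / (6 * \<beta>^2 * (ln \<rho>)^2) = (pi\<^sup>2 / 6) / c ^ 2" unfolding c_def by (simp add: power_mult_distrib)
    have "eventually (\<lambda>n. (HH 2 (n - 1) / c ^ 2) / ((pi\<^sup>2 / 6) / c ^ 2) = var M (Mn n) / (pi^2 / (6 * \<beta>^2 * (ln \<rho>)^2))) at_top"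
      using ev2 by eventually_elim (simp add: var_eq K)
    moreover have "(\<lambda>n. (HH 2 (n - 1) / c ^ 2) / ((pi\<^sup>2 / 6) / c ^ 2)) \<longlonglongrightarrow> ((pi\<^sup>2 / 6) / c ^ 2) / ((pi\<^sup>2 / 6) / c ^ 2)"
      using c0 by (intro tendsto_divide tendsto_const HH2_lim) simp_all
    moreover have "((pi\<^sup>2 / 6) / c ^ 2) / ((pi\<^sup>2 / 6) / c ^ 2) = 1" using c0 by simp
    ultimately show "((\<lambda>n. var M (Mn n) / (pi^2 / (6 * \<beta>^2 * (ln \<rho>)^2))) \<longlongrightarrow> 1) at_top"
      using tendsto_cong by fastforce
  qed
  have s: "(\<lambda>n. skew M (Mn n)) \<sim>[at_top] (\<lambda>n. 12 * sqrt 6 * zeta3 / pi^3)"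
  proof (rule asymp_equivI')
    define K where "K = 12 * sqrt 6 * zeta3 / pi^3"
    have K0: "K \<noteq> 0" unfolding K_def using zeta3_pos by simp
    have "(\<lambda>n. (2 * HH 3 (n - 1) / c ^ 3) / (HH 2 (n - 1) / c ^ 2) powr (3 / 2))
        \<longlonglongrightarrow> (2 * zeta3 / c ^ 3) / ((pi\<^sup>2 / 6) / c ^ 2) powr (3 / 2)"
      using c0 by (intro tendsto_divide tendsto_powr tendsto_mult tendsto_const HH2_lim HH3_lim) simp_all
    then have "(\<lambda>n. (2 * HH 3 (n - 1) / c ^ 3) / (HH 2 (n - 1) / c ^ 2) powr (3 / 2) / K) \<longlonglongrightarrow> K / K"
      unfolding skew_const[OF c0] K_def[symmetric] by (intro tendsto_divide tendsto_const K0)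
    moreover have "eventually (\<lambda>n. (2 * HH 3 (n - 1) / c ^ 3) / (HH 2 (n - 1) / c ^ 2) powr (3 / 2) / K
        = skew M (Mn n) / (12 * sqrt 6 * zeta3 / pi^3)) at_top"
      using ev2 by eventually_elim (simp add: third_eq K_def)
    ultimately show "((\<lambda>n. skew M (Mn n) / (12 * sqrt 6 * zeta3 / pi^3)) \<longlongrightarrow> 1) at_top"
      using K0 tendsto_cong by fastforce
  qed
  show ?thesis using wc m v s by blast
qed


end
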